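(* There is a constant $C>0$ such that for all integers $n\ge 2$, $D\ge 1$ and $k$ with $0<k\le D$, there exist a deterministic distributed algorithm and, for every graph $G$ of size $n$ and diameter $D$, an advice assignment of size at most $C\,(n^2\log n)/(D-k+1)$, under which the algorithm accomplishes labeled topology recognition in $G$ within time $D-k$.
   Context: Graphs are finite, simple, undirected, connected, with no node labels; at each node of degree $d$ the incident edges carry distinct port numbers $0,\dots,d-1$ (no coherence between endpoints). Isomorphism is a bijection of nodes preserving edges and port numbers at both endpoints. Size = number of nodes; $\log$ is base 2. Communication model (LOCAL): synchronous rounds, all nodes start simultaneously; in each round every node may send arbitrary messages to all neighbours, receives their messages (knowing the arrival port), and performs arbitrary local computation. Initially a node knows only its degree and its advice. Advice: an oracle knowing the graph assigns each node a binary string; the size of advice is the maximum string length. All nodes run the same deterministic algorithm. Labeled topology recognition: all nodes output the same port-labeled graph $H$ with distinct node labels and each node its own label, such that some isomorphism $G\to H$ maps every node to the node carrying the label it output. Time is the number of rounds until all nodes have output (time $0$ means no communication). *)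

theory Defs
  imports Complex_Main
begin

text \<open>Nodes are 0..<gsize G. At node v, port i < deg G v leads to node fst (nbr G v i),
  arriving there at port snd (nbr G v i). Values for ports \<ge> deg are irrelevant.\<close>

record pgraph =
  gsize :: nat
  deg :: "nat \<Rightarrow> nat"
  nbr :: "nat \<Rightarrow> nat \<Rightarrow> nat \<times> nat"

definition adj_rel :: "pgraph \<Rightarrow> (nat \<times> nat) set" where
  "adj_rel G = {(v, u). v < gsize G \<and> (\<exists>i < deg G v. fst (nbr G v i) = u)}"

definition wf_pgraph :: "pgraph \<Rightarrow> bool" where
  "wf_pgraph G \<longleftrightarrow>
     (\<forall>v < gsize G. \<forall>i < deg G v.
        fst (nbr G v i) < gsize G \<and> fst (nbr G v i) \<noteq> v \<and>
        snd (nbr G v i) < deg G (fst (nbr G v i)) \<and>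
        nbr G (fst (nbr G v i)) (snd (nbr G v i)) = (v, i)) \<and>
     (\<forall>v < gsize G. \<forall>i < deg G v. \<forall>j < deg G v.
        fst (nbr G v i) = fst (nbr G v j) \<longrightarrow> i = j)"

definition connected_pgraph :: "pgraph \<Rightarrow> bool" where
  "connected_pgraph G \<longleftrightarrow> gsize G \<ge> 1 \<and>
     (\<forall>u < gsize G. \<forall>v < gsize G. (u, v) \<in> (adj_rel G)\<^sup>*)"

definition gdist :: "pgraph \<Rightarrow> nat \<Rightarrow> nat \<Rightarrow> nat" where
  "gdist G u v = (LEAST d. (u, v) \<in> adj_rel G ^^ d)"

definition diameter :: "pgraph \<Rightarrow> nat" where
  "diameter G = Max {gdist G u v | u v. u < gsize G \<and> v < gsize G}"

definition iso_map :: "pgraph \<Rightarrow> pgraph \<Rightarrow> (nat \<Rightarrow> nat) \<Rightarrow> bool" where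
  "iso_map G H f \<longleftrightarrow> bij_betw f {..<gsize G} {..<gsize H} \<and>
     (\<forall>v < gsize G. deg H (f v) = deg G v \<and>
        (\<forall>i < deg G v. nbr H (f v) i = (f (fst (nbr G v i)), snd (nbr G v i))))"

text \<open>Local states and messages are natural
  numbers (any finite information can be encoded). The initial state depends only on the
  degree and the advice; in each round a node sends message send s i on each port i, and
  updates its state from the received messages indexed by arrival port.
  A node outputs (H, l) at the first round where out gives a value.\<close>

record algorithm =
  init :: "nat \<Rightarrow> bool list \<Rightarrow> nat"
  send :: "nat \<Rightarrow> nat \<Rightarrow> nat"
  trans :: "nat \<Rightarrow> (nat \<Rightarrow> nat) \<Rightarrow> nat"
  out :: "nat \<Rightarrow> (pgraph \<times> nat) option"

fun run :: "algorithm \<Rightarrow> pgraph \<Rightarrow> (nat \<Rightarrow> bool list) \<Rightarrow> nat \<Rightarrow> nat \<Rightarrow> nat" where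
  "run A G adv 0 v = init A (deg G v) (adv v)"
| "run A G adv (Suc t) v =
     trans A (run A G adv t v)
       (\<lambda>j. if j < deg G v
            then send A (run A G adv t (fst (nbr G v j))) (snd (nbr G v j))
            else 0)"

definition outputs_at :: "algorithm \<Rightarrow> pgraph \<Rightarrow> (nat \<Rightarrow> bool list) \<Rightarrow> nat \<Rightarrow> nat
    \<Rightarrow> pgraph \<times> nat \<Rightarrow> bool" where
  "outputs_at A G adv v t res \<longleftrightarrow> out A (run A G adv t v) = Some res \<and>
     (\<forall>t' < t. out A (run A G adv t' v) = None)"

definition solves_ltr :: "algorithm \<Rightarrow> pgraph \<Rightarrow> (nat \<Rightarrow> bool list) \<Rightarrow> nat \<Rightarrow> bool" where
  "solves_ltr A G adv T \<longleftrightarrow>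
     (\<exists>H lab. (\<forall>v < gsize G. \<exists>t \<le> T. outputs_at A G adv v t (H, lab v)) \<and>
              iso_map G H lab)"

definition advice_size_le :: "pgraph \<Rightarrow> (nat \<Rightarrow> bool list) \<Rightarrow> real \<Rightarrow> bool" where
  "advice_size_le G adv b \<longleftrightarrow> (\<forall>v < gsize G. real (length (adv v)) \<le> b)"

end

theory Submission
  imports Defs "HOL-Library.Countable" "HOL-Library.Log_Nat"
begin


lemma adj_wf:
  assumes "wf_pgraph G" "(v,u) \<in> adj_rel G"
  shows "v < gsize G \<and> u < gsize G \<and> (u,v) \<in> adj_rel G"
proof -
  from assms(2) obtain i where i: "v < gsize G" "i < deg G v" "fst (nbr G v i) = u"
    by (auto simp: adj_rel_def)
  with assms(1) have "u < gsize G" "snd (nbr G v i) < deg G u" "nbr G u (snd (nbr G v i)) = (v,i)"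
    unfolding wf_pgraph_def by metis+
  then show ?thesis using i by (auto simp: adj_rel_def intro!: exI[of _ "snd (nbr G v i)"])
qed

lemma relpow_sym:
  assumes "wf_pgraph G" "(x,y) \<in> adj_rel G ^^ m"
  shows "(y,x) \<in> adj_rel G ^^ m"
  using assms(2)
proof (induction m arbitrary: y)
  case 0 then show ?case by auto
next
  case (Suc m)
  then obtain z where "(x,z) \<in> adj_rel G ^^ m" "(z,y) \<in> adj_rel G" by (auto elim: relpow_Suc_E)
  then show ?case using Suc adj_wf[OF assms(1)] by (meson relpow_Suc_I2)
qed

lemma relpow_lt:
  assumes "wf_pgraph G" "(x,y) \<in> adj_rel G ^^ m" "x < gsize G"
  shows "y < gsize G"
  using assms(2,3)
proof (induction m arbitrary: y)
  case 0 then show ?case by auto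
next
  case (Suc m)
  then obtain z where "(x,z) \<in> adj_rel G ^^ m" "(z,y) \<in> adj_rel G" by (auto elim: relpow_Suc_E)
  then show ?case using Suc adj_wf[OF assms(1)] by blast
qed

lemma gdist_path:
  assumes "connected_pgraph G" "x < gsize G" "y < gsize G"
  shows "(x,y) \<in> adj_rel G ^^ gdist G x y"
proof -
  have "(x,y) \<in> (adj_rel G)\<^sup>*" using assms unfolding connected_pgraph_def by blast
  then obtain m where "(x,y) \<in> adj_rel G ^^ m" using rtrancl_power by blast
  then show ?thesis unfolding gdist_def by (rule LeastI)
qed

lemma gdist_le:
  "(x,y) \<in> adj_rel G ^^ m \<Longrightarrow> gdist G x y \<le> m"
  unfolding gdist_def by (rule Least_le)

lemma relpow_trans:
  "(x,y) \<in> R ^^ a \<Longrightarrow> (y,z) \<in> R ^^ b \<Longrightarrow> (x,z) \<in> R ^^ (a+b)"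
  using relpow_add by blast

lemma relpow_split:
  assumes "(x,z) \<in> R ^^ m" "i \<le> m"
  shows "\<exists>y. (x,y) \<in> R ^^ i \<and> (y,z) \<in> R ^^ (m - i)"
proof -
  have "m = i + (m - i)" using assms by simp
  then have "(x,z) \<in> R ^^ i O R ^^ (m-i)" using assms relpow_add by metis
  then show ?thesis by blast
qed

locale gctx =
  fixes G :: pgraph and u :: nat
  assumes wf: "wf_pgraph G" and con: "connected_pgraph G" and u: "u < gsize G"
begin

abbreviation "R \<equiv> adj_rel G"
abbreviation "n \<equiv> gsize G"
definition "\<delta> x = gdist G u x"

lemma P1:
  assumes "x < n" "j \<le> \<delta> x"
  shows "\<exists>y. (x,y) \<in> R ^^ (\<delta> x - j) \<and> \<delta> y = j"
proof -
  have ux: "(u,x) \<in> R ^^ \<delta> x" unfolding \<delta>_def by (rule gdist_path[OF con u assms(1)])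
  then have xu: "(x,u) \<in> R ^^ \<delta> x" by (rule relpow_sym[OF wf])
  have le: "\<delta> x - j \<le> \<delta> x" by simp
  obtain y where y1: "(x,y) \<in> R ^^ (\<delta> x - j)" and y2: "(y,u) \<in> R ^^ (\<delta> x - (\<delta> x - j))"
    using relpow_split[OF xu le] by blast
  have e: "\<delta> x - (\<delta> x - j) = j" using assms(2) by simp
  have yu: "(u,y) \<in> R ^^ j" using relpow_sym[OF wf y2] e by simp
  have a: "\<delta> y \<le> j" unfolding \<delta>_def by (rule gdist_le[OF yu])
  have yn: "y < n" using relpow_lt[OF wf y1 assms(1)] .
  have uy: "(u,y) \<in> R ^^ \<delta> y" unfolding \<delta>_def by (rule gdist_path[OF con u yn])
  have "(u,x) \<in> R ^^ (\<delta> y + (\<delta> x - j))"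
    by (rule relpow_trans[OF uy relpow_sym[OF wf y1]])
  then have "gdist G u x \<le> \<delta> y + (\<delta> x - j)" by (rule gdist_le)
  then have "\<delta> x \<le> \<delta> y + (\<delta> x - j)" unfolding \<delta>_def .
  then show ?thesis using a y1 assms by (intro exI[of _ y]) auto
qed


lemma delta_lt:
  assumes z: "z < n"
  shows "\<delta> z < n"
proof -
  have "{0..\<delta> z} \<subseteq> \<delta> ` {..<n}"
  proof
    fix j assume "j \<in> {0..\<delta> z}"
    then obtain y where y: "(z,y) \<in> R ^^ (\<delta> z - j)" "\<delta> y = j" using P1[OF z] by auto
    have "y < n" using relpow_lt[OF wf y(1) z] .
    then show "j \<in> \<delta> ` {..<n}" using y by auto
  qed
  then have "card {0..\<delta> z} \<le> card (\<delta> ` {..<n})" by (intro card_mono) auto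
  also have "\<dots> \<le> n" using card_image_le[of "{..<n}" \<delta>] by simp
  finally show ?thesis by simp
qed

lemma cover:
  assumes z: "z < n" and Dmax: "\<forall>a<n. \<forall>b<n. gdist G a b \<le> \<delta> z" and T: "T < \<delta> z"
    and v: "v < n" and j: "j \<le> T"
  shows "\<exists>y i. i \<le> T \<and> (v,y) \<in> R ^^ i \<and> \<delta> y mod (T+1) = j"
proof (cases "T \<le> \<delta> v")
  case True
  define i where "i = (\<delta> v - j) mod (T+1)"
  have iT: "i \<le> T" unfolding i_def by (simp add: less_Suc_eq_le)
  have "i \<le> \<delta> v" using iT True by simp
  then obtain y where y: "(v,y) \<in> R ^^ (\<delta> v - (\<delta> v - i))" "\<delta> y = \<delta> v - i"
    using P1[OF v, of "\<delta> v - i"] by auto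
  have "\<delta> v - (\<delta> v - i) = i" using \<open>i \<le> \<delta> v\<close> by simp
  moreover have "(\<delta> v - i) mod (T+1) = j"
  proof -
    have "\<delta> v - j = (T+1) * ((\<delta> v - j) div (T+1)) + i" unfolding i_def by (metis div_mult_mod_eq mult.commute)
    then have "\<delta> v - i = j + (T+1) * ((\<delta> v - j) div (T+1))" using j True by linarith
    moreover have "(j + (T+1) * ((\<delta> v - j) div (T+1))) mod (T+1) = j"
      unfolding mod_mult_self2 using j by simp
    ultimately show ?thesis by simp
  qed
  ultimately show ?thesis using y iT by metis
next
  case False
  show ?thesis
  proof (cases "j \<le> \<delta> v")
    case True
    then obtain y where y: "(v,y) \<in> R ^^ (\<delta> v - j)" "\<delta> y = j" using P1[OF v] by auto
    then show ?thesis using False j by (intro exI[of _ y] exI[of _ "\<delta> v - j"]) auto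
  next
    case jv: False
    define m where "m = gdist G v z"
    have vz: "(v,z) \<in> R ^^ m" unfolding m_def by (rule gdist_path[OF con v z])
    have mD: "m \<le> \<delta> z" using Dmax v z m_def by blast
    define S where "S = {i. i \<le> m \<and> (\<exists>y. (v,y) \<in> R ^^ i \<and> (y,z) \<in> R ^^ (m-i) \<and> j \<le> \<delta> y)}"
    have "m \<in> S" unfolding S_def using vz j T by (intro CollectI conjI exI[of _ z]) auto
    define i0 where "i0 = (LEAST i. i \<in> S)"
    have i0S: "i0 \<in> S" unfolding i0_def using \<open>m \<in> S\<close> by (rule LeastI)
    have i0min: "\<And>i. i \<in> S \<Longrightarrow> i0 \<le> i" unfolding i0_def by (rule Least_le)
    obtain y where y: "i0 \<le> m" "(v,y) \<in> R ^^ i0" "(y,z) \<in> R ^^ (m-i0)" "j \<le> \<delta> y"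
      using i0S unfolding S_def by blast
    have "i0 \<noteq> 0"
    proof
      assume "i0 = 0"
      then have "y = v" using y(2) by (auto elim: relpow_0_E)
      then show False using y(4) jv by simp
    qed
    then obtain i1 where i1: "i0 = Suc i1" by (cases i0) auto
    obtain y' where y': "(v,y') \<in> R ^^ i1" "(y',y) \<in> R" using y(2) i1 by (auto elim: relpow_Suc_E)
    have "(y',z) \<in> R ^^ Suc (m - i0)" using relpow_Suc_I2[OF y'(2) y(3)] .
    moreover have "Suc (m - i0) = m - i1" using i1 y(1) by simp
    ultimately have y'z: "(y',z) \<in> R ^^ (m - i1)" by simp
    have "i1 \<notin> S" using i0min i1 by fastforce
    then have "\<delta> y' < j" using y' y'z i1 y(1) unfolding S_def by auto
    have y'n: "y' < n" using relpow_lt[OF wf y'(1) v] .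
    have "(u,y') \<in> R ^^ \<delta> y'" unfolding \<delta>_def by (rule gdist_path[OF con u y'n])
    then have "(u,y) \<in> R ^^ Suc (\<delta> y')" using y'(2) by (rule relpow_Suc_I)
    then have "\<delta> y \<le> Suc (\<delta> y')" unfolding \<delta>_def by (rule gdist_le)
    then have dy: "\<delta> y = j" using y(4) \<open>\<delta> y' < j\<close> by simp
    have yn: "y < n" using relpow_lt[OF wf y(2) v] .
    have "(u,y) \<in> R ^^ \<delta> y" unfolding \<delta>_def by (rule gdist_path[OF con u yn])
    then have "(u,z) \<in> R ^^ (\<delta> y + (m - i0))" using y(3) by (rule relpow_trans)
    then have "\<delta> z \<le> \<delta> y + (m - i0)" unfolding \<delta>_def by (rule gdist_le)
    then have "i0 \<le> T" using dy mD y(1) j by linarith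
    then show ?thesis using y(2) dy j by (intro exI[of _ y] exI[of _ i0]) auto
  qed
qed
end



definition W :: "nat \<Rightarrow> nat" where "W n = floorlog 2 n"
definition bitsw :: "nat \<Rightarrow> nat \<Rightarrow> bool list" where "bitsw w x = map (bit x) [0..<w]"
definition numb :: "bool list \<Rightarrow> nat" where "numb bs = horner_sum of_bool 2 bs"

lemma numb_bitsw: "numb (bitsw w x) = take_bit w x"
  by (simp add: numb_def bitsw_def horner_sum_bit_eq_take_bit)

lemma length_bitsw[simp]: "length (bitsw w x) = w" by (simp add: bitsw_def)

lemma W_bound: "n \<ge> 1 \<Longrightarrow> n < 2 ^ W n"
  unfolding W_def using floorlog_bounds[of n 2] by simp

lemma W_pos: "n \<ge> 1 \<Longrightarrow> W n \<ge> 1"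
  unfolding W_def floorlog_def by simp

lemma numb_bitsw_small: "x < n \<Longrightarrow> numb (bitsw (W n) x) = x"
  using W_bound[of n] numb_bitsw[of "W n" x] by (simp add: take_bit_nat_eq_self)

definition gval :: "pgraph \<Rightarrow> nat \<Rightarrow> nat \<Rightarrow> nat" where
  "gval G n j = (let v = j div (2*n+1); r = j mod (2*n+1); i = (r - 1) div 2 in
     if r = 0 then deg G v else if i < deg G v then (if odd r then fst (nbr G v i) else snd (nbr G v i)) else 0)"

definition Bf :: "pgraph \<Rightarrow> nat \<Rightarrow> nat \<Rightarrow> bool" where
  "Bf G n p = bit (gval G n (p div W n)) (p mod W n)"

definition sz :: "nat \<Rightarrow> nat \<Rightarrow> nat" where
  "sz n T = n*(2*n+1) * W n div (T+1) + 1"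

definition piece :: "pgraph \<Rightarrow> nat \<Rightarrow> nat \<Rightarrow> nat \<Rightarrow> bool list" where
  "piece G n T j = map (\<lambda>q. Bf G n (j * sz n T + q)) [0..<sz n T]"

definition advice :: "pgraph \<Rightarrow> nat \<Rightarrow> nat \<Rightarrow> (nat \<Rightarrow> nat) \<Rightarrow> nat \<Rightarrow> bool list" where
  "advice G n T \<delta> v = bitsw (W n) v @ bitsw (W n) (\<delta> v mod (T+1)) @ piece G n T (\<delta> v mod (T+1))"

definition getbit :: "nat \<Rightarrow> nat \<Rightarrow> bool list list \<Rightarrow> nat \<Rightarrow> bool" where
  "getbit n T L p = (case find (\<lambda>x. numb (take (W n) (drop (W n) x)) = p div sz n T) L of
     Some x \<Rightarrow> drop (2 * W n) x ! (p mod sz n T) | None \<Rightarrow> False)"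

definition numL :: "nat \<Rightarrow> nat \<Rightarrow> bool list list \<Rightarrow> nat \<Rightarrow> nat" where
  "numL n T L j = numb (map (\<lambda>q. getbit n T L (j * W n + q)) [0..<W n])"

definition decH :: "nat \<Rightarrow> nat \<Rightarrow> bool list list \<Rightarrow> pgraph" where
  "decH n T L = \<lparr>gsize = n, deg = \<lambda>v. if v < n then numL n T L (v*(2*n+1)) else 0,
     nbr = \<lambda>v i. if v < n \<and> i < numL n T L (v*(2*n+1))
       then (numL n T L (v*(2*n+1)+1+2*i), numL n T L (v*(2*n+1)+2+2*i)) else (0,0)\<rparr>"

definition canon :: "pgraph \<Rightarrow> nat \<Rightarrow> pgraph" where
  "canon G n = \<lparr>gsize = n, deg = \<lambda>v. if v < n then deg G v else 0,
     nbr = \<lambda>v i. if v < n \<and> i < deg G v then nbr G v i else (0,0)\<rparr>"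

type_synonym st = "nat \<times> bool list \<times> nat \<times> bool list list"

definition Lof :: "nat \<Rightarrow> bool list list" where "Lof s = snd (snd (snd (from_nat s :: st)))"

definition alg :: "nat \<Rightarrow> nat \<Rightarrow> algorithm" where
  "alg n T = \<lparr>init = \<lambda>d a. to_nat ((0::nat), a, d, [a]),
     send = \<lambda>s i. s,
     trans = \<lambda>s m. (case (from_nat s :: st) of (t,a,d,L) \<Rightarrow>
        to_nat (Suc t, a, d, L @ concat (map (\<lambda>j. Lof (m j)) [0..<d]))),
     out = \<lambda>s. (case (from_nat s :: st) of (t,a,d,L) \<Rightarrow>
        if t = T then Some (decH n T L, numb (take (W n) a)) else None)\<rparr>"

lemma alg_simps[simp]:
  "init (alg n T) d a = to_nat ((0::nat), a, d, [a])"
  "send (alg n T) s i = s"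
  "trans (alg n T) s m = (case (from_nat s :: st) of (t,a,d,L) \<Rightarrow>
        to_nat (Suc t, a, d, L @ concat (map (\<lambda>j. Lof (m j)) [0..<d])))"
  "out (alg n T) s = (case (from_nat s :: st) of (t,a,d,L) \<Rightarrow>
        if t = T then Some (decH n T L, numb (take (W n) a)) else None)"
  by (simp_all add: alg_def)

lemma run_inv:
  assumes wf: "wf_pgraph G" 
  shows "v < gsize G \<Longrightarrow> run (alg n T) G adv t v = to_nat (t, adv v, deg G v, Lof (run (alg n T) G adv t v)) \<and>
    (\<forall>x\<in>set (Lof (run (alg n T) G adv t v)). \<exists>w<gsize G. x = adv w) \<and>
    (\<forall>w i. i \<le> t \<longrightarrow> (v,w) \<in> adj_rel G ^^ i \<longrightarrow> adv w \<in> set (Lof (run (alg n T) G adv t v)))"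
proof (induction t arbitrary: v)
  case 0
  then show ?case by (auto simp: Lof_def elim: relpow_0_E)
next
  case (Suc t)
  let ?r = "run (alg n T) G adv"
  let ?nb = "\<lambda>j. fst (nbr G v j)"
  have nbn: "\<And>j. j < deg G v \<Longrightarrow> ?nb j < gsize G" using wf Suc.prems unfolding wf_pgraph_def by blast
  define L where "L = Lof (?r t v)"
  define L' where "L' = L @ concat (map (\<lambda>j. Lof (?r t (?nb j))) [0..<deg G v])"
  have fr: "from_nat (?r t v) = (t, adv v, deg G v, L)"
    using Suc.IH[OF Suc.prems] unfolding L_def by (metis from_nat_to_nat)
  have mc: "map (\<lambda>j. Lof (if j < deg G v then send (alg n T) (?r t (?nb j)) (snd (nbr G v j)) else 0)) [0..<deg G v]
     = map (\<lambda>j. Lof (?r t (?nb j))) [0..<deg G v]" by (rule map_cong) (auto simp only: alg_simps(2) atLeastLessThan_iff set_upt if_True)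
  have "?r (Suc t) v = to_nat (Suc t, adv v, deg G v, L')"
    by (simp add: fr L'_def mc del: alg_simps(4))
  then have e: "Lof (?r (Suc t) v) = L'" and e2: "?r (Suc t) v = to_nat (Suc t, adv v, deg G v, L')"
    by (simp_all add: Lof_def)
  have A: "\<forall>x\<in>set L'. \<exists>w<gsize G. x = adv w"
    using Suc.IH[OF Suc.prems] Suc.IH[OF nbn] unfolding L'_def L_def by auto
  have B: "adv w \<in> set L'" if H1: "i \<le> Suc t" and H2: "(v,w) \<in> adj_rel G ^^ i" for w i
  proof (cases "i = 0")
    case True
    then have vw: "w = v" using H2 by (auto elim: relpow_0_E)
    have "\<forall>w i. i \<le> t \<longrightarrow> (v,w) \<in> adj_rel G ^^ i \<longrightarrow> adv w \<in> set L"
      using Suc.IH[OF Suc.prems] unfolding L_def by blast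
    then have "adv w \<in> set L" using vw relpow_0_I[of v "adj_rel G"] by blast
    then show ?thesis unfolding L'_def by simp
  next
    case False
    then obtain i' where ii: "i = Suc i'" by (cases i) auto
    then obtain x where x: "(v,x) \<in> adj_rel G" "(x,w) \<in> adj_rel G ^^ i'" using H2 relpow_Suc_D2[of v w i' "adj_rel G"] by blast
    then obtain j where j: "j < deg G v" "?nb j = x" unfolding adj_rel_def by auto
    have "adv w \<in> set (Lof (?r t (?nb j)))" using Suc.IH[OF nbn[OF j(1)]] x j H1 ii by auto
    then show ?thesis unfolding L'_def using j(1) by auto
  qed
  show ?case using e e2 A B by simp
qed




lemma deg_lt:
  assumes wf: "wf_pgraph G" and v: "v < gsize G"
  shows "deg G v < gsize G"
proof -
  let ?f = "\<lambda>i. fst (nbr G v i)"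
  have inj: "inj_on ?f {..<deg G v}" using wf v unfolding wf_pgraph_def inj_on_def by blast
  have sub: "?f ` {..<deg G v} \<subseteq> {..<gsize G} - {v}" using wf v unfolding wf_pgraph_def by auto
  have "deg G v = card (?f ` {..<deg G v})" using card_image[OF inj] by simp
  also have "\<dots> \<le> card ({..<gsize G} - {v})" by (rule card_mono[OF _ sub]) auto
  also have "\<dots> = gsize G - 1" using v by simp
  finally show ?thesis using v by simp
qed

lemma dm_nat:
  assumes "r < (M::nat)"
  shows "(v*M + r) div M = v" "(v*M + r) mod M = r"
proof -
  have M: "M \<noteq> 0" using assms by simp
  show "(v*M + r) div M = v" using div_mult_self3[OF M, of v r] assms by simp
  show "(v*M + r) mod M = r" using mod_mult_self3[of v M r] assms by simp
qed

locale dec =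
  fixes G :: pgraph and n T :: nat and \<delta> :: "nat \<Rightarrow> nat"
  assumes wf: "wf_pgraph G" and gs: "gsize G = n" and n1: "n \<ge> 1" and Tn: "T < n"
begin

definition good :: "bool list list \<Rightarrow> bool" where
  "good L \<longleftrightarrow> (\<forall>x\<in>set L. \<exists>w<n. x = advice G n T \<delta> w) \<and>
     (\<forall>j\<le>T. \<exists>w<n. \<delta> w mod (T+1) = j \<and> advice G n T \<delta> w \<in> set L)"

lemma idx_adv: "numb (take (W n) (drop (W n) (advice G n T \<delta> w))) = \<delta> w mod (T+1)"
proof -
  have "\<delta> w mod (T+1) < T+1" by simp
  then have "\<delta> w mod (T+1) < n" using Tn by linarith
  then show ?thesis unfolding advice_def by (simp add: numb_bitsw_small)
qed

lemma drop_adv: "drop (2 * W n) (advice G n T \<delta> w) = piece G n T (\<delta> w mod (T+1))"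
  unfolding advice_def by (simp add: mult_2)

lemma getbit_ok:
  assumes g: "good L" and p: "p < (T+1) * sz n T"
  shows "getbit n T L p = Bf G n p"
proof -
  define j where "j = p div sz n T"
  have "j < T+1" unfolding j_def using p by (rule less_mult_imp_div_less)
  then have jT: "j \<le> T" by simp
  let ?P = "\<lambda>x. numb (take (W n) (drop (W n) x)) = p div sz n T"
  obtain w0 where "w0 < n" "\<delta> w0 mod (T+1) = j" "advice G n T \<delta> w0 \<in> set L" using g jT unfolding good_def by blast
  then have "advice G n T \<delta> w0 \<in> set L \<and> ?P (advice G n T \<delta> w0)" using idx_adv[of w0] unfolding j_def by simp
  then have "\<exists>x. x \<in> set L \<and> ?P x" by blast
  then have "find ?P L \<noteq> None" unfolding find_None_iff by blast
  then obtain x where fx: "find ?P L = Some x" by blast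
  then have x: "x \<in> set L" "?P x" unfolding find_Some_iff by auto
  then obtain w where w: "w < n" "x = advice G n T \<delta> w" using g unfolding good_def by blast
  have "\<delta> w mod (T+1) = j" using x(2) w idx_adv j_def by simp
  then have "drop (2 * W n) x = piece G n T j" using drop_adv w by simp
  moreover have "p mod sz n T < sz n T" by (simp add: sz_def)
  ultimately have "drop (2 * W n) x ! (p mod sz n T) = Bf G n (j * sz n T + p mod sz n T)"
    unfolding piece_def by simp
  also have "j * sz n T + p mod sz n T = p" unfolding j_def by (rule div_mult_mod_eq)
  finally show ?thesis unfolding getbit_def using fx by simp
qed

lemma NW_lt: "n*(2*n+1) * W n < (T+1) * sz n T"
proof -
  let ?a = "n*(2*n+1) * W n"
  define q where "q = ?a div (T+1)"
  define r where "r = ?a mod (T+1)"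
  have "?a = (T+1) * q + r" unfolding q_def r_def by (metis div_mult_mod_eq mult.commute)
  moreover have "r < T+1" unfolding r_def by simp
  moreover have "(T+1) * sz n T = (T+1) * q + (T+1)" unfolding sz_def q_def by (simp add: algebra_simps)
  ultimately show ?thesis by linarith
qed

lemma numL_ok:
  assumes g: "good L" and j: "j < n*(2*n+1)"
  shows "numL n T L j = take_bit (W n) (gval G n j)"
proof -
  have W0: "W n > 0" using W_pos[OF n1] by simp
  have mapeq: "map (\<lambda>q. getbit n T L (j * W n + q)) [0..<W n] = map (bit (gval G n j)) [0..<W n]"
  proof (rule map_cong[OF refl])
    fix q assume "q \<in> set [0..<W n]"
    then have q: "q < W n" by simp
    have "j * W n + q < (j+1) * W n" using q by simp
    also have "\<dots> \<le> n*(2*n+1) * W n" using j by (intro mult_right_mono) auto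
    also have "\<dots> < (T+1) * sz n T" by (rule NW_lt)
    finally have "getbit n T L (j * W n + q) = Bf G n (j * W n + q)" by (rule getbit_ok[OF g])
    also have "\<dots> = bit (gval G n j) q" unfolding Bf_def using q W0 by simp
    finally show "getbit n T L (j * W n + q) = bit (gval G n j) q" .
  qed
  show ?thesis unfolding numL_def mapeq numb_def horner_sum_bit_eq_take_bit by (rule refl)
qed

lemma gval_deg: "v < n \<Longrightarrow> gval G n (v*(2*n+1)) = deg G v"
  using dm_nat[of 0 "2*n+1" v] unfolding gval_def Let_def by simp

lemma gval_nbr:
  assumes "v < n" "i < n"
  shows "gval G n (v*(2*n+1)+1+2*i) = (if i < deg G v then fst (nbr G v i) else 0)"
    and "gval G n (v*(2*n+1)+2+2*i) = (if i < deg G v then snd (nbr G v i) else 0)"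
proof -
  have r1: "1+2*i < 2*n+1" "2+2*i < 2*n+1" using assms by auto
  have a: "(v*(2*n+1)+1+2*i) div (2*n+1) = v" "(v*(2*n+1)+1+2*i) mod (2*n+1) = 1+2*i"
    using dm_nat[OF r1(1), of v] by (simp_all only: add.assoc)
  have b: "(v*(2*n+1)+2+2*i) div (2*n+1) = v" "(v*(2*n+1)+2+2*i) mod (2*n+1) = 2+2*i"
    using dm_nat[OF r1(2), of v] by (simp_all only: add.assoc)
  show "gval G n (v*(2*n+1)+1+2*i) = (if i < deg G v then fst (nbr G v i) else 0)"
    unfolding gval_def Let_def a by simp
  show "gval G n (v*(2*n+1)+2+2*i) = (if i < deg G v then snd (nbr G v i) else 0)"
    unfolding gval_def Let_def b by simp
qed

lemma decH_ok:
  assumes g: "good L"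
  shows "decH n T L = canon G n"
proof -
  have dg: "numL n T L (v*(2*n+1)) = deg G v" if v: "v < n" for v
  proof -
    have "v*(2*n+1) < n*(2*n+1)" using v by (intro mult_strict_right_mono) auto
    then have "numL n T L (v*(2*n+1)) = take_bit (W n) (deg G v)" using numL_ok[OF g] gval_deg[OF v] by simp
    also have "\<dots> = deg G v" using deg_lt[OF wf, of v] gs v W_bound[OF n1]
      by (intro take_bit_nat_eq_self) simp
    finally show ?thesis .
  qed
  have nb: "(numL n T L (v*(2*n+1)+1+2*i), numL n T L (v*(2*n+1)+2+2*i)) = nbr G v i"
    if v: "v < n" and i: "i < deg G v" for v i
  proof -
    have idn: "i < n" using i deg_lt[OF wf, of v] gs v by simp
    have "(v+1)*(2*n+1) \<le> n*(2*n+1)" using v by (intro mult_right_mono) auto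
    then have le: "v*(2*n+1) + (2*n+1) \<le> n*(2*n+1)" by (simp add: algebra_simps)
    have i1: "v*(2*n+1)+1+2*i < n*(2*n+1)" "v*(2*n+1)+2+2*i < n*(2*n+1)" using idn le by linarith+
    have f: "fst (nbr G v i) < n" and s0: "snd (nbr G v i) < deg G (fst (nbr G v i))"
      using wf v i gs unfolding wf_pgraph_def by auto
    have s: "snd (nbr G v i) < n" using s0 deg_lt[OF wf, of "fst (nbr G v i)"] f gs by simp
    have "numL n T L (v*(2*n+1)+1+2*i) = fst (nbr G v i)"
      using numL_ok[OF g i1(1)] gval_nbr(1)[OF v idn] i f W_bound[OF n1]
      by (simp add: take_bit_nat_eq_self)
    moreover have "numL n T L (v*(2*n+1)+2+2*i) = snd (nbr G v i)"
      using numL_ok[OF g i1(2)] gval_nbr(2)[OF v idn] i s W_bound[OF n1]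
      by (simp add: take_bit_nat_eq_self)
    ultimately show ?thesis by simp
  qed
  show ?thesis unfolding decH_def canon_def
    using dg nb by (auto simp: fun_eq_iff)
qed

end



lemma len_nat:
  assumes n1: "n \<ge> 1" and Tn: "T + 1 \<le> n"
  shows "(2 * W n + sz n T) * (T+1) \<le> 6 * n^2 * W n"
proof -
  let ?N = "n*(2*n+1)" let ?W = "W n"
  have W1: "?W \<ge> 1" using W_pos[OF n1] .
  have a: "sz n T * (T+1) \<le> ?N * ?W + (T+1)"
    unfolding sz_def using div_times_less_eq_dividend[of "?N * ?W" "T+1"] by (simp add: algebra_simps)
  have b: "2 * ?W * (T+1) \<le> 2 * ?W * n" using Tn by (rule mult_left_mono) simp
  have b2: "2 * ?W * n \<le> 2 * n^2 * ?W" using n1 by (simp add: power2_eq_square)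
  have c: "?N * ?W \<le> 3 * n^2 * ?W" using n1 by (simp add: power2_eq_square algebra_simps)
  have d: "T + 1 \<le> n^2 * ?W" using Tn n1 W1
    by (metis le_trans mult_le_mono power2_eq_square mult_1_right nat_mult_1)
  have "(2 * ?W + sz n T) * (T+1) = 2 * ?W * (T+1) + sz n T * (T+1)" by (simp add: algebra_simps)
  also have "\<dots> \<le> 6 * n^2 * ?W" using a b b2 c d by linarith
  finally show ?thesis .
qed

lemma W_log:
  assumes "n \<ge> 2"
  shows "real (W n) \<le> 2 * log 2 (real n)"
proof -
  have l1: "log 2 (real n) \<ge> 1" using assms by simp
  have "W n = nat \<lfloor>log 2 (real n)\<rfloor> + 1" unfolding W_def floorlog_def using assms by simp
  then have e: "real (W n) = real (nat \<lfloor>log 2 (real n)\<rfloor>) + 1" by simp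
  have "real (nat \<lfloor>log 2 (real n)\<rfloor>) \<le> log 2 (real n)" using l1 by linarith
  then show ?thesis using l1 e by linarith
qed


lemma main_graph:
  assumes n2: "n \<ge> 2" and k: "0 < k" "k \<le> D"
    and G: "wf_pgraph G" "connected_pgraph G" "gsize G = n" "diameter G = D"
  shows "\<exists>adv. advice_size_le G adv (12 * real n ^ 2 * log 2 (real n) / real (D - k + 1)) \<and>
                 solves_ltr (alg n (D - k)) G adv (D - k)"
proof -
  define T where "T = D - k"
  define Sd where "Sd = {gdist G u v | u v. u < n \<and> v < n}"
  have Sd_eq: "Sd = (\<lambda>(u,v). gdist G u v) ` ({..<n} \<times> {..<n})" unfolding Sd_def by auto
  have fin: "finite Sd" unfolding Sd_eq by simp
  have "gdist G 0 0 \<in> Sd" unfolding Sd_def using n2 by (intro CollectI exI[of _ 0]) auto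
  then have ne: "Sd \<noteq> {}" by blast
  have DS: "D = Max Sd" using G(3,4) unfolding diameter_def Sd_def by simp
  have "D \<in> Sd" unfolding DS using fin ne by (rule Max_in)
  then obtain u z where uz: "u < n" "z < n" "D = gdist G u z" unfolding Sd_def by blast
  have Dmax: "\<forall>a<n. \<forall>b<n. gdist G a b \<le> D"
  proof (intro allI impI)
    fix a b assume "a < n" "b < n"
    then have "gdist G a b \<in> Sd" unfolding Sd_def by blast
    then show "gdist G a b \<le> D" unfolding DS using Max_ge[OF fin] by blast
  qed
  interpret gctx G u using G uz by unfold_locales auto
  have dz: "\<delta> z = D" unfolding \<delta>_def using uz by simp
  have Dn: "D < n" using delta_lt[of z] uz dz G(3) by simp
  have Tn: "T < n" unfolding T_def using Dn by simp
  have TD: "T < \<delta> z" unfolding T_def dz using k by simp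
  interpret dec G n T \<delta> using G Tn n2 by unfold_locales auto
  define adv where "adv = advice G n T \<delta>"
  have "advice_size_le G adv (12 * real n ^ 2 * log 2 (real n) / real (D - k + 1))"
    unfolding advice_size_le_def
  proof (intro allI impI)
    fix v assume "v < gsize G"
    have len: "length (adv v) = 2 * W n + sz n T" unfolding adv_def advice_def piece_def by simp
    have e1: "real (D - k + 1) = real T + 1" unfolding T_def by simp
    have "(2 * W n + sz n T) * (T+1) \<le> 6 * n^2 * W n" using len_nat[of n T] n2 Tn by simp
    then have "real ((2 * W n + sz n T) * (T+1)) \<le> real (6 * n^2 * W n)" by (simp only: of_nat_le_iff)
    then have "real (length (adv v)) * (real T + 1) \<le> 6 * real n ^ 2 * real (W n)"
      unfolding len by (simp add: algebra_simps)
    also have "\<dots> \<le> 6 * real n ^ 2 * (2 * log 2 (real n))"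
      using W_log[OF n2] by (intro mult_left_mono) auto
    also have "\<dots> = 12 * real n ^ 2 * log 2 (real n)" by simp
    finally show "real (length (adv v)) \<le> 12 * real n ^ 2 * log 2 (real n) / real (D - k + 1)"
      unfolding e1 by (simp add: pos_le_divide_eq)
  qed
  moreover have "solves_ltr (alg n T) G adv T"
    unfolding solves_ltr_def
  proof (rule exI[of _ "canon G n"], rule exI[of _ id], intro conjI allI impI)
    fix v assume v: "v < gsize G"
    let ?r = "run (alg n T) G adv"
    define L where "L = Lof (?r T v)"
    note ri = run_inv[OF G(1) v, of n T adv T]
    have g: "good L" unfolding good_def
    proof (intro conjI allI impI)
      show "\<forall>x\<in>set L. \<exists>w<n. x = advice G n T \<delta> w" using ri G(3) unfolding L_def adv_def by auto
    next
      fix j assume j: "j \<le> T"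
      obtain y i where yi: "i \<le> T" "(v,y) \<in> adj_rel G ^^ i" "\<delta> y mod (T+1) = j"
      proof -
        have zn: "z < gsize G" using uz G(3) by simp
        have Dm: "\<forall>a<gsize G. \<forall>b<gsize G. gdist G a b \<le> \<delta> z" using Dmax dz G(3) by simp
        show ?thesis using cover[OF zn Dm TD v j] that by blast
      qed
      have "y < n" using relpow_lt[OF G(1) yi(2) v] G(3) by simp
      moreover have "adv y \<in> set L" using ri yi unfolding L_def by blast
      ultimately show "\<exists>w<n. \<delta> w mod (T+1) = j \<and> advice G n T \<delta> w \<in> set L"
        using yi unfolding adv_def by blast
    qed
    have fr: "from_nat (?r T v) = (T, adv v, deg G v, L)" using ri unfolding L_def by (metis from_nat_to_nat)
    have lab: "numb (take (W n) (adv v)) = v" unfolding adv_def advice_def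
      using numb_bitsw_small[of v n] v G(3) by simp
    have "out (alg n T) (?r T v) = Some (canon G n, id v)" using fr decH_ok[OF g] lab by simp
    moreover have "out (alg n T) (?r t' v) = None" if "t' < T" for t'
    proof -
      have "from_nat (?r t' v) = (t', adv v, deg G v, Lof (?r t' v))"
        using run_inv[OF G(1) v, of n T adv t'] by (metis from_nat_to_nat)
      then show ?thesis using that by simp
    qed
    ultimately show "\<exists>t\<le>T. outputs_at (alg n T) G adv v t (canon G n, id v)"
      unfolding outputs_at_def by blast
  next
    show "iso_map G (canon G n) id"
      unfolding iso_map_def canon_def using G(3) by auto
  qed
  ultimately show ?thesis unfolding T_def by blast
qed

theorem theorem6p1:
  shows "\<exists>C::real. C > 0 \<and>
    (\<forall>n D k :: nat. n \<ge> 2 \<longrightarrow> D \<ge> 1 \<longrightarrow> 0 < k \<longrightarrow> k \<le> D \<longrightarrow>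
       (\<exists>A :: algorithm. \<forall>G :: pgraph.
          wf_pgraph G \<and> connected_pgraph G \<and> gsize G = n \<and> diameter G = D \<longrightarrow>
          (\<exists>adv. advice_size_le G adv (C * real n ^ 2 * log 2 (real n) / real (D - k + 1)) \<and>
                 solves_ltr A G adv (D - k))))"
proof (intro exI[of _ 12] conjI allI impI)
  fix n D k :: nat
  assume "n \<ge> 2" "D \<ge> 1" "0 < k" "k \<le> D"
  then show "\<exists>A. \<forall>G. wf_pgraph G \<and> connected_pgraph G \<and> gsize G = n \<and> diameter G = D \<longrightarrow>
          (\<exists>adv. advice_size_le G adv (12 * real n ^ 2 * log 2 (real n) / real (D - k + 1)) \<and>
                 solves_ltr A G adv (D - k))"
    using main_graph by blast
qed simp


end
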